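(* Let $\epsilon\in(0,1/2)$ and let $(m_i)_{i\ge1}$, $(r_i)_{i\ge1}$ be sequences of positive integers with $r_i\le m_i$ for all $i$, $\lim_{i\to\infty}m_i=\infty$ and $\limsup_{i\to\infty}\binom{m_i}{\le r_i}2^{-m_i}<1-H(\epsilon)$. Then there exists $c>0$ such that $P_e(m_i,r_i,\epsilon)<1/2-c$ for all sufficiently large $i$.
   Context: $H$ is the binary entropy function and $\binom{m}{\le r}=\sum_{j=0}^r\binom mj$. $RM(m,r)$ is the set of evaluation vectors $(f(x))_{x\in\mathbb{F}_2^m}$ of polynomials $f\in\mathbb{F}_2[X_1,\dots,X_m]$ of degree at most $r$. Draw $f$ uniformly from $RM(m,r)$, draw $Z\in\{0,1\}^{\mathbb{F}_2^m}$ with i.i.d. Bernoulli$(\epsilon)$ entries independent of $f$, and set $\tilde f=f+Z$ over $\mathbb{F}_2$. Let $L_{m,r,\epsilon}(\tilde f)$ be the most likely value of $f(0^m)$ given the values $\tilde f(x)$ for all $x\ne0^m$ (a uniformly random bit if both values are equally likely), and $P_e(m,r,\epsilon)=\mathbb{P}(L_{m,r,\epsilon}(\tilde f)\ne f(0^m))$. *)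

theory Defs
  imports "HOL-Analysis.Analysis"
begin

definition bin_entropy :: "real \<Rightarrow> real" where
  "bin_entropy p = - p * log 2 p - (1 - p) * log 2 (1 - p)"

definition binom_le :: "nat \<Rightarrow> nat \<Rightarrow> nat" where
  "binom_le m r = (\<Sum>j\<le>r. m choose j)"

text \<open>Points of F_2^m: a point x = (x_1,...,x_m) is represented by its support,
  a subset of {0..<m} (coordinate X_(i+1) corresponds to index i). The zero point is {}.\<close>
definition pts :: "nat \<Rightarrow> nat set set" where
  "pts m = Pow {..<m}"

definition words :: "nat \<Rightarrow> (nat set \<Rightarrow> bool) set" where
  "words m = {w. \<forall>x. x \<notin> pts m \<longrightarrow> \<not> w x}"

definition mono_exps :: "nat \<Rightarrow> nat \<Rightarrow> (nat \<Rightarrow> nat) set" where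
  "mono_exps m r = {e. (\<forall>i. m \<le> i \<longrightarrow> e i = 0) \<and> (\<Sum>i<m. e i) \<le> r}"

definition mono_eval :: "(nat \<Rightarrow> nat) \<Rightarrow> nat set \<Rightarrow> bool" where
  "mono_eval e x = (\<forall>i. 0 < e i \<longrightarrow> i \<in> x)"

text \<open>Evaluation vector of the polynomial with F_2-coefficients a (a e = coefficient
  of the monomial with exponent vector e) over the monomials of degree \<le> r.\<close>
definition poly_evalvec :: "nat \<Rightarrow> nat \<Rightarrow> ((nat \<Rightarrow> nat) \<Rightarrow> bool) \<Rightarrow> nat set \<Rightarrow> bool" where
  "poly_evalvec m r a = (\<lambda>x. x \<in> pts m \<and> odd (card {e \<in> mono_exps m r. a e \<and> mono_eval e x}))"

definition RM :: "nat \<Rightarrow> nat \<Rightarrow> (nat set \<Rightarrow> bool) set" where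
  "RM m r = range (poly_evalvec m r)"

definition noise_prob :: "nat \<Rightarrow> real \<Rightarrow> (nat set \<Rightarrow> bool) \<Rightarrow> real" where
  "noise_prob m eps Z = (\<Prod>x\<in>pts m. if Z x then eps else 1 - eps)"

text \<open>Likelihood (up to the common factor 1/|RM(m,r)|) of f(0)=b given the
  received values y x at all nonzero points x.\<close>
definition lik :: "nat \<Rightarrow> nat \<Rightarrow> real \<Rightarrow> (nat set \<Rightarrow> bool) \<Rightarrow> bool \<Rightarrow> real" where
  "lik m r eps y b = (\<Sum>g\<in>{g \<in> RM m r. g {} = b}.
      \<Prod>x\<in>pts m - {{}}. if g x = y x then 1 - eps else eps)"

text \<open>Error probability of the MAP decoder L for the transmitted f and noise Z:
  1 if the wrong value is strictly more likely, 1/2 on a tie (random bit), 0 otherwise.\<close>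
definition dec_err :: "nat \<Rightarrow> nat \<Rightarrow> real \<Rightarrow> (nat set \<Rightarrow> bool) \<Rightarrow> (nat set \<Rightarrow> bool) \<Rightarrow> real" where
  "dec_err m r eps f Z =
     (let y = (\<lambda>x. f x \<noteq> Z x);
          lr = lik m r eps y (f {}); lw = lik m r eps y (\<not> f {})
      in if lw > lr then 1 else if lw = lr then 1/2 else 0)"

definition P_e :: "nat \<Rightarrow> nat \<Rightarrow> real \<Rightarrow> real" where
  "P_e m r eps = (\<Sum>f\<in>RM m r. \<Sum>Z\<in>words m.
      (1 / real (card (RM m r))) * noise_prob m eps Z * dec_err m r eps f Z)"

end

theory Submission
  imports Defs
begin


definition agr :: "'i set \<Rightarrow> ('i \<Rightarrow> 'v) \<Rightarrow> ('i \<Rightarrow> 'v) \<Rightarrow> bool" where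
  "agr A y z \<longleftrightarrow> (\<forall>x\<in>A. y x = z x)"

definition Pm :: "('i \<Rightarrow> 'v) set \<Rightarrow> (('i \<Rightarrow> 'v) \<Rightarrow> real) \<Rightarrow> 'i set \<Rightarrow> ('i \<Rightarrow> 'v) \<Rightarrow> real" where
  "Pm S p A y = (\<Sum>z\<in>{z\<in>S. agr A z y}. p z)"

definition Hn :: "('i \<Rightarrow> 'v) set \<Rightarrow> (('i \<Rightarrow> 'v) \<Rightarrow> real) \<Rightarrow> 'i set \<Rightarrow> real" where
  "Hn S p A = - (\<Sum>y\<in>S. p y * ln (Pm S p A y))"

lemma agr_sym: "agr A y z = agr A z y" unfolding agr_def by auto
lemma agr_trans: "agr A x y \<Longrightarrow> agr A y z \<Longrightarrow> agr A x z" unfolding agr_def by auto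
lemma agr_mono: "agr A x y \<Longrightarrow> B \<subseteq> A \<Longrightarrow> agr B x y" unfolding agr_def by auto
lemma agr_Un: "agr (A \<union> B) x y \<longleftrightarrow> agr A x y \<and> agr B x y" unfolding agr_def by auto

lemma Pm_pos:
  assumes "finite S" "\<And>y. y \<in> S \<Longrightarrow> p y > 0" "y \<in> S"
  shows "Pm S p A y \<ge> p y" "Pm S p A y > 0"
proof -
  have "p y = (\<Sum>z\<in>{y}. p z)" by simp
  also have "\<dots> \<le> Pm S p A y" unfolding Pm_def
    by (rule sum_mono2) (use assms in \<open>auto simp: agr_def intro: less_imp_le\<close>)
  finally show "Pm S p A y \<ge> p y" .
  then show "Pm S p A y > 0" using assms(2)[OF assms(3)] by linarith
qed

lemma Pm_cong:
  assumes "agr A y y'"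
  shows "Pm S p A y = Pm S p A y'"
  unfolding Pm_def
  by (rule sum.cong) (use assms in \<open>auto intro: agr_trans simp: agr_sym\<close>)

lemma ln_ge_1_minus_inv: "0 < x \<Longrightarrow> 1 - 1 / x \<le> ln (x::real)"
proof -
  assume "0 < x"
  then have "ln (1/x) \<le> 1/x - 1" by (intro ln_le_minus_one) simp
  then show ?thesis using \<open>0 < x\<close> by (simp add: ln_div)
qed

lemma sum_swap3: "(\<Sum>y\<in>A. \<Sum>t\<in>B. \<Sum>u\<in>C. f y t u) = (\<Sum>t\<in>B. \<Sum>u\<in>C. \<Sum>y\<in>A. f y t u)"
proof -
  have "(\<Sum>y\<in>A. \<Sum>t\<in>B. \<Sum>u\<in>C. f y t u) = (\<Sum>t\<in>B. \<Sum>y\<in>A. \<Sum>u\<in>C. f y t u)"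
    by (rule sum.swap)
  also have "\<dots> = (\<Sum>t\<in>B. \<Sum>u\<in>C. \<Sum>y\<in>A. f y t u)"
    by (rule sum.cong[OF refl], rule sum.swap)
  finally show ?thesis .
qed

lemma submod:
  assumes fin: "finite S" and pos: "\<And>y. y \<in> S \<Longrightarrow> p y > 0"
  shows "Hn S p (A \<union> B) + Hn S p (A \<inter> B) \<le> Hn S p A + Hn S p B"
proof -
  define PA where "PA = Pm S p A"
  define PB where "PB = Pm S p B"
  define PU where "PU = Pm S p (A \<union> B)"
  define PI where "PI = Pm S p (A \<inter> B)"
  have posA: "\<And>y. y \<in> S \<Longrightarrow> PA y > 0" unfolding PA_def using Pm_pos(2)[of S p] fin pos by blast
  have posB: "\<And>y. y \<in> S \<Longrightarrow> PB y > 0" unfolding PB_def using Pm_pos(2)[of S p] fin pos by blast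
  have posU: "\<And>y. y \<in> S \<Longrightarrow> PU y > 0" unfolding PU_def using Pm_pos(2)[of S p] fin pos by blast
  have posI: "\<And>y. y \<in> S \<Longrightarrow> PI y > 0" unfolding PI_def using Pm_pos(2)[of S p] fin pos by blast
  define K where "K = (\<Sum>y\<in>S. p y * (PA y * PB y / (PU y * PI y)))"
  have step1: "(\<Sum>y\<in>S. p y) - K \<le> (\<Sum>y\<in>S. p y * (ln (PU y) + ln (PI y) - ln (PA y) - ln (PB y)))"
    unfolding K_def sum_subtractf[symmetric]
  proof (rule sum_mono)
    fix y assume y: "y \<in> S"
    have "1 - 1 / (PU y * PI y / (PA y * PB y)) \<le> ln (PU y * PI y / (PA y * PB y))"
      by (rule ln_ge_1_minus_inv) (use posA posB posU posI y in simp)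
    also have "\<dots> = ln (PU y) + ln (PI y) - ln (PA y) - ln (PB y)"
      using posA[OF y] posB[OF y] posU[OF y] posI[OF y] by (simp add: ln_mult ln_div)
    finally have "1 - PA y * PB y / (PU y * PI y) \<le> ln (PU y) + ln (PI y) - ln (PA y) - ln (PB y)"
      by simp
    then show "p y - p y * (PA y * PB y / (PU y * PI y))
        \<le> p y * (ln (PU y) + ln (PI y) - ln (PA y) - ln (PB y))"
      using pos[OF y] by (metis mult_le_cancel_left_pos right_diff_distrib mult.right_neutral)
  qed
  have inner: "(\<Sum>y\<in>{y\<in>S. agr A t y \<and> agr B u y}. p y / (PU y * PI y))
      \<le> (if agr (A \<inter> B) u t then 1 / PI t else 0)" if t: "t \<in> S" and u: "u \<in> S" for t u
  proof (cases "{y\<in>S. agr A t y \<and> agr B u y} = {}")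
    case True
    show ?thesis unfolding True using posI[OF t] by simp
  next
    case False
    then obtain y0 where y0: "y0 \<in> S" "agr A t y0" "agr B u y0" by auto
    have eqset: "{y\<in>S. agr A t y \<and> agr B u y} = {y\<in>S. agr (A \<union> B) y y0}"
      using y0 by (auto simp: agr_Un intro: agr_trans simp: agr_sym)
    have "(\<Sum>y\<in>{y\<in>S. agr A t y \<and> agr B u y}. p y / (PU y * PI y))
        = (\<Sum>y\<in>{y\<in>S. agr (A \<union> B) y y0}. p y / (PU y0 * PI t))"
      unfolding eqset
    proof (rule sum.cong)
      fix y assume "y \<in> {y\<in>S. agr (A \<union> B) y y0}"
      then have h: "agr (A \<union> B) y y0" by auto
      have "PU y = PU y0" unfolding PU_def by (rule Pm_cong[OF h])
      moreover have "agr (A \<inter> B) y t"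
        using h y0 by (auto simp: agr_def)
      then have "PI y = PI t" unfolding PI_def by (rule Pm_cong)
      ultimately show "p y / (PU y * PI y) = p y / (PU y0 * PI t)" by simp
    qed simp
    also have "\<dots> = PU y0 / (PU y0 * PI t)"
      unfolding PU_def Pm_def by (simp add: sum_divide_distrib)
    also have "\<dots> = 1 / PI t" using posU[OF y0(1)] by simp
    finally have e: "(\<Sum>y\<in>{y\<in>S. agr A t y \<and> agr B u y}. p y / (PU y * PI y)) = 1 / PI t" .
    have "agr (A \<inter> B) u t" using y0 by (auto simp: agr_def)
    then show ?thesis using e by simp
  qed
  have PAPB: "PA y * PB y = (\<Sum>t\<in>S. \<Sum>u\<in>S. (if agr A t y \<and> agr B u y then p t * p u else 0))" for y
  proof -
    have "PA y * PB y = (\<Sum>t\<in>{t\<in>S. agr A t y}. \<Sum>u\<in>{u\<in>S. agr B u y}. p t * p u)"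
      unfolding PA_def PB_def Pm_def by (rule sum_product)
    also have "\<dots> = (\<Sum>t\<in>S. if agr A t y then (\<Sum>u\<in>S. if agr B u y then p t * p u else 0) else 0)"
      by (simp add: sum.inter_filter fin)
    also have "\<dots> = (\<Sum>t\<in>S. \<Sum>u\<in>S. (if agr A t y \<and> agr B u y then p t * p u else 0))"
      by (rule sum.cong) auto
    finally show ?thesis .
  qed
  have mif: "\<And>(c::real) P x. c * (if P then x else 0) = (if P then c * x else 0)" by simp
  have "K = (\<Sum>y\<in>S. \<Sum>t\<in>S. \<Sum>u\<in>S. (if agr A t y \<and> agr B u y then p t * p u * (p y / (PU y * PI y)) else 0))"
    unfolding K_def PAPB sum_distrib_left sum_divide_distrib by (intro sum.cong refl) auto
  also have "\<dots> = (\<Sum>t\<in>S. \<Sum>u\<in>S. \<Sum>y\<in>S. (if agr A t y \<and> agr B u y then p t * p u * (p y / (PU y * PI y)) else 0))"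
    by (rule sum_swap3)
  also have "\<dots> = (\<Sum>t\<in>S. \<Sum>u\<in>S. p t * p u * (\<Sum>y\<in>{y\<in>S. agr A t y \<and> agr B u y}. p y / (PU y * PI y)))"
    by (intro sum.cong refl) (simp add: sum.inter_filter[OF fin] sum_distrib_left mif)
  also have "\<dots> \<le> (\<Sum>t\<in>S. \<Sum>u\<in>S. p t * p u * (if agr (A \<inter> B) u t then 1 / PI t else 0))"
    apply (intro sum_mono mult_left_mono inner)
    using pos by (auto intro: less_imp_le)
  also have "\<dots> = (\<Sum>t\<in>S. p t / PI t * (\<Sum>u\<in>S. if agr (A \<inter> B) u t then p u else 0))"
    by (intro sum.cong refl) (simp add: sum_distrib_left mif, intro sum.cong refl, simp)
  also have "\<dots> = (\<Sum>t\<in>S. p t)"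
  proof (rule sum.cong)
    fix t assume t: "t \<in> S"
    have "(\<Sum>u\<in>S. if agr (A \<inter> B) u t then p u else 0) = PI t"
      unfolding PI_def Pm_def by (simp add: sum.inter_filter fin)
    then show "p t / PI t * (\<Sum>u\<in>S. if agr (A \<inter> B) u t then p u else 0) = p t"
      using posI[OF t] by simp
  qed simp
  finally have K: "K \<le> (\<Sum>t\<in>S. p t)" .
  have "Hn S p A + Hn S p B - Hn S p (A \<union> B) - Hn S p (A \<inter> B)
      = (\<Sum>y\<in>S. p y * (ln (PU y) + ln (PI y) - ln (PA y) - ln (PB y)))"
    unfolding Hn_def PA_def PB_def PU_def PI_def
    by (simp add: algebra_simps sum_subtractf sum.distrib)
  then show ?thesis using step1 K by linarith
qed

lemma han_aux:
  assumes fin: "finite S" and pos: "\<And>y. y \<in> S \<Longrightarrow> p y > 0"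
    and finV: "finite V" and BV: "B \<subseteq> V" and one: "(\<Sum>y\<in>S. p y) = 1"
  shows "(\<Sum>a\<in>B. Hn S p V - Hn S p (V - {a})) \<le> Hn S p B"
  using finite_subset[OF BV finV] BV
proof (induction B rule: finite_induct)
  case empty
  have "Pm S p {} y = 1" for y unfolding Pm_def using one by (simp add: agr_def)
  then show ?case by (simp add: Hn_def)
next
  case (insert b B')
  have sm: "Hn S p ((V - {b}) \<union> insert b B') + Hn S p ((V - {b}) \<inter> insert b B')
      \<le> Hn S p (V - {b}) + Hn S p (insert b B')"
    by (rule submod[OF fin pos])
  have e1: "(V - {b}) \<union> insert b B' = V" using insert by auto
  have e2: "(V - {b}) \<inter> insert b B' = B'" using insert by auto
  have "(\<Sum>a\<in>insert b B'. Hn S p V - Hn S p (V - {a}))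
      = (Hn S p V - Hn S p (V - {b})) + (\<Sum>a\<in>B'. Hn S p V - Hn S p (V - {a}))"
    using insert by simp
  also have "\<dots> \<le> (Hn S p V - Hn S p (V - {b})) + Hn S p B'"
    using insert by simp
  also have "\<dots> \<le> Hn S p (insert b B')" using sm unfolding e1 e2 by linarith
  finally show ?case .
qed

lemma han:
  assumes fin: "finite S" and pos: "\<And>y. y \<in> S \<Longrightarrow> p y > 0" and finV: "finite V"
    and one: "(\<Sum>y\<in>S. p y) = 1"
  shows "(\<Sum>a\<in>V. Hn S p V - Hn S p (V - {a})) \<le> Hn S p V"
  using han_aux[of S p V V] assms by auto

lemma Hn_invariant:
  assumes fin: "finite S" and bij: "bij_betw \<sigma> S S" and pinv: "\<And>y. y \<in> S \<Longrightarrow> p (\<sigma> y) = p y"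
    and ag: "\<And>y z. y \<in> S \<Longrightarrow> z \<in> S \<Longrightarrow> agr B (\<sigma> z) (\<sigma> y) = agr A z y"
  shows "Hn S p B = Hn S p A"
proof -
  have Pmeq: "Pm S p B (\<sigma> y) = Pm S p A y" if y: "y \<in> S" for y
  proof -
    have "Pm S p B (\<sigma> y) = (\<Sum>z\<in>S. if agr B z (\<sigma> y) then p z else 0)"
      unfolding Pm_def by (rule sum.inter_filter[OF fin])
    also have "\<dots> = (\<Sum>z\<in>S. if agr B (\<sigma> z) (\<sigma> y) then p (\<sigma> z) else 0)"
      by (rule sum.reindex_bij_betw[OF bij, symmetric])
    also have "\<dots> = (\<Sum>z\<in>S. if agr A z y then p z else 0)"
      by (rule sum.cong) (use ag y pinv in auto)
    also have "\<dots> = Pm S p A y"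
      unfolding Pm_def by (rule sum.inter_filter[OF fin, symmetric])
    finally show ?thesis .
  qed
  have "Hn S p B = - (\<Sum>y\<in>S. p (\<sigma> y) * ln (Pm S p B (\<sigma> y)))"
    unfolding Hn_def by (subst sum.reindex_bij_betw[OF bij]) simp
  also have "\<dots> = Hn S p A"
    unfolding Hn_def by (simp add: Pmeq pinv cong: sum.cong)
  finally show ?thesis .
qed



lemma words_gen_eq: "{Z. \<forall>x. x \<notin> V \<longrightarrow> \<not> Z x} = (\<lambda>B x. x \<in> B) ` Pow V"
proof (intro equalityI subsetI)
  fix Z assume "Z \<in> {Z. \<forall>x. x \<notin> V \<longrightarrow> \<not> Z x}"
  then have "Z = (\<lambda>x. x \<in> {x. Z x})" "{x. Z x} \<in> Pow V" by auto
  then show "Z \<in> (\<lambda>B x. x \<in> B) ` Pow V" by blast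
qed auto

lemma finite_words_gen: "finite V \<Longrightarrow> finite {Z. \<forall>x. x \<notin> V \<longrightarrow> \<not> Z x}"
  unfolding words_gen_eq by simp

lemma sum_prod_words:
  fixes f :: "'a \<Rightarrow> bool \<Rightarrow> real"
  assumes "finite V"
  shows "(\<Sum>Z\<in>{Z. \<forall>x. x \<notin> V \<longrightarrow> \<not> Z x}. \<Prod>x\<in>V. f x (Z x)) = (\<Prod>x\<in>V. f x True + f x False)"
  using assms
proof (induction V rule: finite_induct)
  case empty
  have "{Z::'a \<Rightarrow> bool. \<forall>x. x \<notin> {} \<longrightarrow> \<not> Z x} = {\<lambda>_. False}" by auto
  then show ?case by simp
next
  case (insert b V)
  define W where "W = {Z::'a \<Rightarrow> bool. \<forall>x. x \<notin> V \<longrightarrow> \<not> Z x}"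
  have finW: "finite W" unfolding W_def using insert by (simp add: finite_words_gen)
  have eq: "{Z. \<forall>x. x \<notin> insert b V \<longrightarrow> \<not> Z x} = W \<union> (\<lambda>Z. Z(b:=True)) ` W"
  proof (intro equalityI subsetI)
    fix Z assume Z: "Z \<in> {Z. \<forall>x. x \<notin> insert b V \<longrightarrow> \<not> Z x}"
    show "Z \<in> W \<union> (\<lambda>Z. Z(b:=True)) ` W"
    proof (cases "Z b")
      case True
      have "Z(b:=False) \<in> W" using Z unfolding W_def by auto
      moreover have "Z = (Z(b:=False))(b:=True)" using True by (auto simp: fun_eq_iff)
      ultimately show ?thesis by blast
    next
      case False
      then have "Z \<in> W" using Z unfolding W_def by auto
      then show ?thesis by blast
    qed
  next
    fix Z assume "Z \<in> W \<union> (\<lambda>Z. Z(b:=True)) ` W"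
    then show "Z \<in> {Z. \<forall>x. x \<notin> insert b V \<longrightarrow> \<not> Z x}" unfolding W_def by auto
  qed
  have disj: "W \<inter> (\<lambda>Z. Z(b:=True)) ` W = {}" unfolding W_def using insert by auto
  have inj: "inj_on (\<lambda>Z. Z(b:=True)) W"
  proof (rule inj_onI)
    fix Z Z' assume Z: "Z \<in> W" "Z' \<in> W" and e: "Z(b:=True) = Z'(b:=True)"
    show "Z = Z'"
    proof
      fix x show "Z x = Z' x"
      proof (cases "x = b")
        case True then show ?thesis using Z insert unfolding W_def by auto
      next
        case False then show ?thesis using fun_cong[OF e, of x] by simp
      qed
    qed
  qed
  have bF: "\<And>Z. Z \<in> W \<Longrightarrow> Z b = False" unfolding W_def using insert by auto
  have "(\<Sum>Z\<in>{Z. \<forall>x. x \<notin> insert b V \<longrightarrow> \<not> Z x}. \<Prod>x\<in>insert b V. f x (Z x))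
      = (\<Sum>Z\<in>W. \<Prod>x\<in>insert b V. f x (Z x)) + (\<Sum>Z\<in>W. \<Prod>x\<in>insert b V. f x ((Z(b:=True)) x))"
    unfolding eq using finW disj inj by (simp add: sum.union_disjoint sum.reindex)
  also have "\<dots> = (\<Sum>Z\<in>W. f b False * (\<Prod>x\<in>V. f x (Z x))) + (\<Sum>Z\<in>W. f b True * (\<Prod>x\<in>V. f x (Z x)))"
  proof -
    have "\<And>Z. (\<Prod>x\<in>V. f x ((Z(b:=True)) x)) = (\<Prod>x\<in>V. f x (Z x))"
      by (rule prod.cong) (use insert in auto)
    moreover have "\<And>Z. Z \<in> W \<Longrightarrow> (\<Prod>x\<in>insert b V. f x (Z x)) = f b (Z b) * (\<Prod>x\<in>V. f x (Z x))"
      using insert by simp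
    ultimately have "\<And>Z. Z \<in> W \<Longrightarrow> (\<Prod>x\<in>insert b V. f x (Z x)) = f b False * (\<Prod>x\<in>V. f x (Z x))"
      and "\<And>Z. Z \<in> W \<Longrightarrow> (\<Prod>x\<in>insert b V. f x ((Z(b:=True)) x)) = f b True * (\<Prod>x\<in>V. f x (Z x))"
    proof -
      fix Z assume Z: "Z \<in> W"
      have "Z b = False" using bF[OF Z] .
      then show "(\<Prod>x\<in>insert b V. f x (Z x)) = f b False * (\<Prod>x\<in>V. f x (Z x))"
        using insert by simp
    next
      fix Z assume Z: "Z \<in> W"
      have "(\<Prod>x\<in>V. f x ((Z(b:=True)) x)) = (\<Prod>x\<in>V. f x (Z x))"
        by (rule prod.cong) (use insert in auto)
      then show "(\<Prod>x\<in>insert b V. f x ((Z(b:=True)) x)) = f b True * (\<Prod>x\<in>V. f x (Z x))"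
        using insert by simp
    qed
    then show ?thesis by (intro arg_cong2[where f="(+)"] sum.cong) auto
  qed
  also have "\<dots> = (f b True + f b False) * (\<Sum>Z\<in>W. \<Prod>x\<in>V. f x (Z x))"
    by (simp add: sum_distrib_left[symmetric] algebra_simps)
  also have "\<dots> = (\<Prod>x\<in>insert b V. f x True + f x False)"
    using insert unfolding W_def by simp
  finally show ?case .
qed

lemma ln4: "ln (4::real) = 2 * ln 2"
proof -
  have "ln (4::real) = ln (2^2)" by simp
  also have "\<dots> = 2 * ln 2" by (subst ln_realpow) auto
  finally show ?thesis .
qed

lemma deriv_h: "0 < (x::real) \<Longrightarrow> x < 1 \<Longrightarrow> ((\<lambda>t. - t * ln t - (1 - t) * ln (1 - t) - 2 * ln 2 * t) has_real_derivative (- (ln x + 1) + (ln (1 - x) + 1) - 2 * ln 2)) (at x)"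
  apply (rule derivative_eq_intros | simp)+
  done

lemma hbound_aux:
  fixes t :: real
  assumes "0 < t" "t \<le> 1/2"
  shows "2 * ln 2 * t \<le> - t * ln t - (1 - t) * ln (1 - t)"
proof (cases "t \<le> 1/4")
  case True
  have "ln t \<le> ln (1/4)" using assms True by simp
  also have "ln (1/4) = - (2 * ln (2::real))"
    by (simp add: ln_div ln4)
  finally have "t * ln t \<le> t * (- (2 * ln 2))"
    by (rule mult_left_mono) (use assms in simp)
  then have a: "2 * ln 2 * t \<le> - t * ln t" by (simp add: algebra_simps)
  have "ln (1 - t) \<le> 0" using assms by simp
  moreover have "0 \<le> 1 - t" using assms by simp
  ultimately have "(1 - t) * ln (1 - t) \<le> 0" by (simp add: mult_nonneg_nonpos)
  then have "0 \<le> - (1 - t) * ln (1 - t)" by linarith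
  then show ?thesis using a by linarith
next
  case False
  define f where "f = (\<lambda>t::real. - t * ln t - (1 - t) * ln (1 - t) - 2 * ln 2 * t)"
  have "f (1/2) \<le> f t"
  proof (rule DERIV_nonpos_imp_nonincreasing[of t "1/2" f])
    show "t \<le> 1/2" by fact
    fix x assume x1: "t \<le> x" and x2: "x \<le> 1/2"
    have x: "t \<le> x \<and> x \<le> 1/2" using x1 x2 by simp
    then have x0: "0 < x" "x < 1" using False by auto
    have "DERIV f x :> (- (ln x + 1) + (ln (1 - x) + 1) - 2 * ln 2)"
      unfolding f_def by (rule deriv_h[OF x0])
    moreover have "- (ln x + 1) + (ln (1 - x) + 1) - 2 * ln 2 \<le> 0"
    proof -
      have "ln (1 - x) \<le> ln (4 * x)" using x0 x False by simp
      also have "ln (4 * x) = 2 * ln 2 + ln x"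
        using x0 by (simp add: ln_mult ln4)
      finally show ?thesis by linarith
    qed
    ultimately show "\<exists>y. DERIV f x :> y \<and> y \<le> 0" by blast
  qed
  moreover have "f (1/2) = 0" unfolding f_def by (simp add: ln_div)
  ultimately show ?thesis unfolding f_def by linarith
qed

lemma hbound:
  fixes u v :: real
  assumes "0 < u" "0 < v"
  shows "2 * ln 2 * min u v \<le> u * (ln (u + v) - ln u) + v * (ln (u + v) - ln v)"
proof -
  have main: "2 * ln 2 * u \<le> u * (ln (u + v) - ln u) + v * (ln (u + v) - ln v)"
    if "0 < u" "0 < v" "u \<le> v" for u v :: real
  proof -
    define t where "t = u / (u + v)"
    have t: "0 < t" "t \<le> 1/2" unfolding t_def using that by (auto simp: field_simps)
    have t1: "1 - t = v / (u + v)" unfolding t_def using that by (simp add: field_simps)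
    have "ln t = ln u - ln (u + v)" unfolding t_def using that by (simp add: ln_div)
    moreover have "ln (1 - t) = ln v - ln (u + v)" unfolding t1 using that by (simp add: ln_div)
    ultimately have l1: "ln (u + v) - ln u = - ln t" and l2: "ln (u + v) - ln v = - ln (1 - t)" by auto
    have e1: "u * (ln (u + v) - ln u) = (u + v) * (- t * ln t)"
      unfolding l1 unfolding t_def using that by (simp add: field_simps)
    have e2: "v * (ln (u + v) - ln v) = (u + v) * (- (1 - t) * ln (1 - t))"
      unfolding l2 unfolding t1 using that by (simp add: field_simps)
    have "u * (ln (u + v) - ln u) + v * (ln (u + v) - ln v)
        = (u + v) * (- t * ln t - (1 - t) * ln (1 - t))"
      unfolding e1 e2 by (simp add: algebra_simps)
    moreover have "2 * ln 2 * u = (u + v) * (2 * ln 2 * t)"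
      unfolding t_def using that by (simp add: field_simps)
    moreover have "(u + v) * (2 * ln 2 * t) \<le> (u + v) * (- t * ln t - (1 - t) * ln (1 - t))"
      using hbound_aux[OF t] that by (intro mult_left_mono) auto
    ultimately show ?thesis by linarith
  qed
  show ?thesis
  proof (cases "u \<le> v")
    case True then show ?thesis using main[OF assms True] by simp
  next
    case False then show ?thesis using main[of v u] assms by (simp add: add.commute)
  qed
qed



definition Dfam :: "nat \<Rightarrow> nat \<Rightarrow> nat set set" where
  "Dfam m r = {S. S \<subseteq> {..<m} \<and> card S \<le> r}"

definition fam_eval :: "nat \<Rightarrow> nat set set \<Rightarrow> nat set \<Rightarrow> bool" where
  "fam_eval m F = (\<lambda>x. x \<in> pts m \<and> odd (card {S\<in>F. S \<subseteq> x}))"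

definition supp :: "(nat \<Rightarrow> nat) \<Rightarrow> nat set" where
  "supp e = {i. 0 < e i}"

definition symd :: "nat set \<Rightarrow> nat set \<Rightarrow> nat set" where
  "symd x a = (x - a) \<union> (a - x)"

lemma finite_Dfam: "finite (Dfam m r)"
  by (rule finite_subset[of _ "Pow {..<m}"]) (auto simp: Dfam_def)

lemma card_filter_sum: "finite A \<Longrightarrow> card {x\<in>A. P x} = (\<Sum>x\<in>A. if P x then 1 else (0::nat))"
  by (simp add: sum.inter_filter[symmetric])

lemma parity_sum:
  fixes k :: "'a \<Rightarrow> nat"
  assumes "finite I"
  shows "odd (\<Sum>i\<in>I. k i) \<longleftrightarrow> odd (card {i\<in>I. odd (k i)})"
  using assms
proof (induction I rule: finite_induct)
  case empty then show ?case by simp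
next
  case (insert j I)
  show ?case
  proof (cases "odd (k j)")
    case True
    then have c: "{i\<in>insert j I. odd (k i)} = insert j {i\<in>I. odd (k i)}" by auto
    have "card (insert j {i\<in>I. odd (k i)}) = Suc (card {i\<in>I. odd (k i)})"
      using insert by simp
    then show ?thesis unfolding c using insert True by simp
  next
    case False
    then have c: "{i\<in>insert j I. odd (k i)} = {i\<in>I. odd (k i)}" by auto
    show ?thesis unfolding c using insert False by simp
  qed
qed

lemma double_count:
  assumes "finite A" "finite B"
  shows "(\<Sum>S\<in>A. card {T\<in>B. R S T}) = (\<Sum>T\<in>B. card {S\<in>A. R S T})"
  using assms by (simp add: card_filter_sum sum.swap[of _ A B])

lemma finite_mono_exps: "finite (mono_exps m r)"
proof -
  have "mono_exps m r \<subseteq> (\<lambda>f i. if i < m then f i else 0) ` ({..<m} \<rightarrow>\<^sub>E {..r})"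
  proof
    fix e assume e: "e \<in> mono_exps m r"
    have le: "e i \<le> r" if "i < m" for i
    proof -
      have "e i \<le> (\<Sum>j<m. e j)" using that by (intro member_le_sum) auto
      then show ?thesis using e unfolding mono_exps_def by auto
    qed
    have "e = (\<lambda>i. if i < m then restrict e {..<m} i else 0)"
      using e unfolding mono_exps_def by (auto simp: fun_eq_iff)
    moreover have "restrict e {..<m} \<in> {..<m} \<rightarrow>\<^sub>E {..r}" using le by auto
    ultimately show "e \<in> (\<lambda>f i. if i < m then f i else 0) ` ({..<m} \<rightarrow>\<^sub>E {..r})" by blast
  qed
  then show ?thesis by (rule finite_subset) (auto intro: finite_PiE)
qed

lemma supp_in_Dfam:
  assumes "e \<in> mono_exps m r"
  shows "supp e \<in> Dfam m r"
proof -
  have sub: "supp e \<subseteq> {..<m}" using assms unfolding mono_exps_def supp_def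
    by (auto simp: not_less[symmetric])
  have "card (supp e) = (\<Sum>i\<in>supp e. 1)" by simp
  also have "\<dots> \<le> (\<Sum>i\<in>supp e. e i)" by (intro sum_mono) (auto simp: supp_def)
  also have "\<dots> \<le> (\<Sum>i<m. e i)" by (intro sum_mono2 sub) auto
  also have "\<dots> \<le> r" using assms unfolding mono_exps_def by auto
  finally show ?thesis using sub unfolding Dfam_def by auto
qed

lemma mono_eval_supp: "mono_eval e x \<longleftrightarrow> supp e \<subseteq> x"
  unfolding mono_eval_def supp_def by auto

lemma card_fibers:
  assumes "finite A" "finite B" "g ` A \<subseteq> B"
  shows "card A = (\<Sum>b\<in>B. card {a\<in>A. g a = b})"
proof -
  have "A = (\<Union>b\<in>B. {a\<in>A. g a = b})" using assms by auto
  then have "card A = card (\<Union>b\<in>B. {a\<in>A. g a = b})" by simp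
  also have "\<dots> = (\<Sum>b\<in>B. card {a\<in>A. g a = b})"
    by (rule card_UN_disjoint) (use assms in auto)
  finally show ?thesis .
qed

lemma RM_fam:
  assumes "c \<in> RM m r"
  shows "\<exists>F \<subseteq> Dfam m r. c = fam_eval m F"
proof -
  obtain a where c: "c = poly_evalvec m r a" using assms unfolding RM_def by auto
  define E where "E = {e\<in>mono_exps m r. a e}"
  have finE: "finite E" unfolding E_def using finite_mono_exps by simp
  define k where "k S = card {e\<in>E. supp e = S}" for S
  define F where "F = {S\<in>Dfam m r. odd (k S)}"
  have "poly_evalvec m r a x = fam_eval m F x" for x
  proof -
    have eq1: "{e \<in> mono_exps m r. a e \<and> mono_eval e x} = {e\<in>E. supp e \<subseteq> x}"
      unfolding E_def mono_eval_supp by auto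
    have "card {e\<in>E. supp e \<subseteq> x} = (\<Sum>S\<in>{S\<in>Dfam m r. S \<subseteq> x}. card {e\<in>{e\<in>E. supp e \<subseteq> x}. supp e = S})"
    proof (rule card_fibers)
      show "finite {e\<in>E. supp e \<subseteq> x}" using finE by simp
      show "finite {S\<in>Dfam m r. S \<subseteq> x}" using finite_Dfam by simp
      show "supp ` {e\<in>E. supp e \<subseteq> x} \<subseteq> {S\<in>Dfam m r. S \<subseteq> x}"
        using supp_in_Dfam unfolding E_def by auto
    qed
    also have "\<dots> = (\<Sum>S\<in>{S\<in>Dfam m r. S \<subseteq> x}. k S)"
      unfolding k_def by (intro sum.cong refl arg_cong[where f=card]) auto
    finally have "odd (card {e\<in>E. supp e \<subseteq> x}) \<longleftrightarrow> odd (card {S\<in>{S\<in>Dfam m r. S \<subseteq> x}. odd (k S)})"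
      using parity_sum[of "{S\<in>Dfam m r. S \<subseteq> x}" k] finite_Dfam by simp
    also have "{S\<in>{S\<in>Dfam m r. S \<subseteq> x}. odd (k S)} = {S\<in>F. S \<subseteq> x}" unfolding F_def by auto
    finally show ?thesis unfolding poly_evalvec_def fam_eval_def eq1 by simp
  qed
  then show ?thesis unfolding c F_def by (intro exI[of _ "{S\<in>Dfam m r. odd (k S)}"]) auto
qed

definition ind :: "nat set \<Rightarrow> nat \<Rightarrow> nat" where
  "ind S = (\<lambda>i. if i \<in> S then 1 else 0)"

lemma fam_RM:
  assumes F: "F \<subseteq> Dfam m r"
  shows "fam_eval m F \<in> RM m r"
proof -
  define a where "a e = (\<exists>S\<in>F. e = ind S)" for e
  have inj: "inj ind" unfolding ind_def inj_def by (auto simp: fun_eq_iff)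
  have indME: "ind S \<in> mono_exps m r" if "S \<in> Dfam m r" for S
  proof -
    have "(\<Sum>i<m. ind S i) = (\<Sum>i\<in>{..<m} \<inter> S. 1)" unfolding ind_def
      by (simp add: sum.If_cases)
    also have "\<dots> = card S" using that unfolding Dfam_def by (simp add: Int_absorb1)
    finally show ?thesis using that unfolding mono_exps_def Dfam_def ind_def by auto
  qed
  have suppind: "supp (ind S) = S" for S unfolding supp_def ind_def by auto
  have "poly_evalvec m r a x = fam_eval m F x" for x
  proof -
    have "{e \<in> mono_exps m r. a e \<and> mono_eval e x} = ind ` {S\<in>F. S \<subseteq> x}"
      unfolding a_def mono_eval_supp using F indME suppind by auto
    then have "card {e \<in> mono_exps m r. a e \<and> mono_eval e x} = card {S\<in>F. S \<subseteq> x}"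
      using inj by (simp add: card_image inj_on_subset)
    then show ?thesis unfolding poly_evalvec_def fam_eval_def by simp
  qed
  then have "fam_eval m F = poly_evalvec m r a" by auto
  then show ?thesis unfolding RM_def by simp
qed


lemma odd_card_interval:
  assumes finS: "finite S"
  shows "odd (card {T. S - a \<subseteq> T \<and> T \<subseteq> S \<and> T \<subseteq> x}) \<longleftrightarrow> S \<subseteq> symd x a"
proof (cases "S - a \<subseteq> x")
  case False
  then have e: "{T. S - a \<subseteq> T \<and> T \<subseteq> S \<and> T \<subseteq> x} = {}" by auto
  have "\<not> S \<subseteq> symd x a" using False unfolding symd_def by auto
  then show ?thesis unfolding e by simp
next
  case True
  have eq: "{T. S - a \<subseteq> T \<and> T \<subseteq> S \<and> T \<subseteq> x} = (\<lambda>U. (S - a) \<union> U) ` Pow (S \<inter> a \<inter> x)"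
  proof (intro equalityI subsetI)
    fix T assume T: "T \<in> {T. S - a \<subseteq> T \<and> T \<subseteq> S \<and> T \<subseteq> x}"
    then have "T = (S - a) \<union> (T \<inter> a)" "T \<inter> a \<in> Pow (S \<inter> a \<inter> x)" by auto
    then show "T \<in> (\<lambda>U. (S - a) \<union> U) ` Pow (S \<inter> a \<inter> x)" by blast
  qed (use True in auto)
  have inj: "inj_on (\<lambda>U. (S - a) \<union> U) (Pow (S \<inter> a \<inter> x))"
  proof (rule inj_onI)
    fix U U' assume "U \<in> Pow (S \<inter> a \<inter> x)" "U' \<in> Pow (S \<inter> a \<inter> x)" "(S - a) \<union> U = (S - a) \<union> U'"
    then show "U = U'" by blast
  qed
  have "card {T. S - a \<subseteq> T \<and> T \<subseteq> S \<and> T \<subseteq> x} = 2 ^ card (S \<inter> a \<inter> x)"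
  proof -
    have "finite (S \<inter> a \<inter> x)" using finS by simp
    then have "card (Pow (S \<inter> a \<inter> x)) = 2 ^ card (S \<inter> a \<inter> x)" by (rule card_Pow)
    then show ?thesis unfolding eq using card_image[OF inj] by simp
  qed
  then have "odd (card {T. S - a \<subseteq> T \<and> T \<subseteq> S \<and> T \<subseteq> x}) \<longleftrightarrow> card (S \<inter> a \<inter> x) = 0"
    by simp
  also have "\<dots> \<longleftrightarrow> S \<inter> a \<inter> x = {}" using finS by simp
  also have "\<dots> \<longleftrightarrow> S \<subseteq> symd x a" using True unfolding symd_def by auto
  finally show ?thesis .
qed

lemma symd_pts:
  assumes "a \<in> pts m"
  shows "symd x a \<in> pts m \<longleftrightarrow> x \<in> pts m"
  using assms unfolding pts_def symd_def by auto

lemma fam_shift: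
  assumes F: "F \<subseteq> Dfam m r" and a: "a \<in> pts m"
  shows "\<exists>F' \<subseteq> Dfam m r. (\<lambda>x. fam_eval m F (symd x a)) = fam_eval m F'"
proof -
  define F' where "F' = {T\<in>Dfam m r. odd (card {S\<in>F. S - a \<subseteq> T \<and> T \<subseteq> S})}"
  have finF: "finite F" using F finite_Dfam finite_subset by blast
  have finS: "finite S" if "S \<in> F" for S
    using F that unfolding Dfam_def by (auto intro: finite_subset)
  have "fam_eval m F (symd x a) = fam_eval m F' x" for x
  proof (cases "x \<in> pts m")
    case False
    then show ?thesis unfolding fam_eval_def using symd_pts[OF a] by simp
  next
    case True
    define kk where "kk S = card {T. S - a \<subseteq> T \<and> T \<subseteq> S \<and> T \<subseteq> x}" for S
    define D where "D = {T\<in>Dfam m r. T \<subseteq> x}"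
    have finD: "finite D" unfolding D_def using finite_Dfam by simp
    have kkD: "kk S = card {T\<in>D. S - a \<subseteq> T \<and> T \<subseteq> S}" if "S \<in> F" for S
    proof -
      have "{T. S - a \<subseteq> T \<and> T \<subseteq> S \<and> T \<subseteq> x} = {T\<in>D. S - a \<subseteq> T \<and> T \<subseteq> S}"
      proof (intro equalityI subsetI)
        fix T assume T: "T \<in> {T. S - a \<subseteq> T \<and> T \<subseteq> S \<and> T \<subseteq> x}"
        have "S \<in> Dfam m r" using that F by auto
        then have "T \<in> Dfam m r" using T finS[OF that] unfolding Dfam_def
          by (auto intro: card_mono order_trans)
        then show "T \<in> {T\<in>D. S - a \<subseteq> T \<and> T \<subseteq> S}" using T unfolding D_def by auto
      qed (auto simp: D_def)
      then show ?thesis unfolding kk_def by simp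
    qed
    have "{S\<in>F. S \<subseteq> symd x a} = {S\<in>F. odd (kk S)}"
      unfolding kk_def using odd_card_interval finS by auto
    then have "odd (card {S\<in>F. S \<subseteq> symd x a}) \<longleftrightarrow> odd (\<Sum>S\<in>F. kk S)"
      using parity_sum[OF finF, of kk] by simp
    also have "(\<Sum>S\<in>F. kk S) = (\<Sum>S\<in>F. card {T\<in>D. S - a \<subseteq> T \<and> T \<subseteq> S})"
      using kkD by simp
    also have "\<dots> = (\<Sum>T\<in>D. card {S\<in>F. S - a \<subseteq> T \<and> T \<subseteq> S})"
      by (rule double_count[OF finF finD])
    finally have "odd (card {S\<in>F. S \<subseteq> symd x a}) \<longleftrightarrow>
        odd (card {T\<in>D. odd (card {S\<in>F. S - a \<subseteq> T \<and> T \<subseteq> S})})"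
      using parity_sum[OF finD] by simp
    also have "{T\<in>D. odd (card {S\<in>F. S - a \<subseteq> T \<and> T \<subseteq> S})} = {T\<in>F'. T \<subseteq> x}"
      unfolding D_def F'_def by auto
    finally show ?thesis unfolding fam_eval_def using True symd_pts[OF a] by simp
  qed
  moreover have "F' \<subseteq> Dfam m r" unfolding F'_def by auto
  ultimately show ?thesis by blast
qed

lemma RM_shift:
  assumes c: "c \<in> RM m r" and a: "a \<in> pts m"
  shows "(\<lambda>x. c (symd x a)) \<in> RM m r"
proof -
  obtain F where F: "F \<subseteq> Dfam m r" "c = fam_eval m F" using RM_fam[OF c] by blast
  obtain F' where F': "F' \<subseteq> Dfam m r" "(\<lambda>x. fam_eval m F (symd x a)) = fam_eval m F'"
    using fam_shift[OF F(1) a] by blast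
  show ?thesis using F F' fam_RM[OF F'(1)] by simp
qed

lemma card_Dfam: "card (Dfam m r) \<le> binom_le m r"
proof -
  have "Dfam m r = (\<Union>j\<in>{..r}. {S. S \<subseteq> {..<m} \<and> card S = j})" unfolding Dfam_def by auto
  then have "card (Dfam m r) \<le> (\<Sum>j\<le>r. card {S. S \<subseteq> {..<m} \<and> card S = j})"
    using card_UN_le[of "{..r}" "\<lambda>j. {S. S \<subseteq> {..<m} \<and> card S = j}"] by simp
  also have "\<dots> = (\<Sum>j\<le>r. m choose j)" by (simp add: n_subsets)
  finally show ?thesis unfolding binom_le_def .
qed

lemma card_RM: "card (RM m r) \<le> 2 ^ binom_le m r"
proof -
  have "RM m r \<subseteq> fam_eval m ` Pow (Dfam m r)" using RM_fam by blast
  then have "card (RM m r) \<le> card (fam_eval m ` Pow (Dfam m r))"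
    by (rule card_mono[rotated]) (simp add: finite_Dfam)
  also have "\<dots> \<le> card (Pow (Dfam m r))" by (rule card_image_le) (simp add: finite_Dfam)
  also have "\<dots> = 2 ^ card (Dfam m r)" by (simp add: card_Pow finite_Dfam)
  also have "\<dots> \<le> 2 ^ binom_le m r" by (rule power_increasing) (use card_Dfam in auto)
  finally show ?thesis .
qed



lemma pts_finite: "finite (pts m)" unfolding pts_def by simp
lemma pts_card: "card (pts m) = 2 ^ m" unfolding pts_def by (simp add: card_Pow)
lemma pts_empty: "{} \<in> pts m" unfolding pts_def by simp

lemma words_finite: "finite (words m)"
  unfolding words_def using finite_words_gen[OF pts_finite] by simp

lemma RM_words: "RM m r \<subseteq> words m"
  unfolding RM_def words_def poly_evalvec_def by auto

lemma RM_finite: "finite (RM m r)"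
  using finite_subset[OF RM_words words_finite] .

lemma RM_nonempty: "RM m r \<noteq> {}"
  unfolding RM_def by simp

lemma RM_card_pos: "0 < card (RM m r)"
  using RM_finite RM_nonempty by (simp add: card_gt_0_iff)

lemma noise_pos: "0 < eps \<Longrightarrow> eps < 1 \<Longrightarrow> 0 < noise_prob m eps Z"
  unfolding noise_prob_def by (rule prod_pos) auto

lemma noise_marg:
  assumes x0: "x0 \<in> pts m"
  shows "(\<Sum>Z\<in>words m. noise_prob m eps Z * g (Z x0)) = eps * g True + (1 - eps) * g False"
proof -
  define f where "f x b = (if b then eps else 1 - eps) * (if x = x0 then g b else 1)" for x b
  have "(\<Sum>Z\<in>words m. noise_prob m eps Z * g (Z x0)) = (\<Sum>Z\<in>words m. \<Prod>x\<in>pts m. f x (Z x))"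
  proof (rule sum.cong)
    fix Z
    have "(\<Prod>x\<in>pts m. f x (Z x)) = (\<Prod>x\<in>pts m. (if Z x then eps else 1 - eps)) * (\<Prod>x\<in>pts m. (if x = x0 then g (Z x) else 1))"
      unfolding f_def by (simp add: prod.distrib)
    also have "(\<Prod>x\<in>pts m. (if x = x0 then g (Z x) else 1)) = g (Z x0)"
      using x0 pts_finite by (simp add: prod.delta)
    finally show "noise_prob m eps Z * g (Z x0) = (\<Prod>x\<in>pts m. f x (Z x))"
      unfolding noise_prob_def by simp
  qed simp
  also have "\<dots> = (\<Prod>x\<in>pts m. f x True + f x False)"
    unfolding words_def by (rule sum_prod_words[OF pts_finite])
  also have "\<dots> = (\<Prod>x\<in>pts m. if x = x0 then eps * g True + (1 - eps) * g False else 1)"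
    by (rule prod.cong) (auto simp: f_def)
  also have "\<dots> = eps * g True + (1 - eps) * g False"
    using x0 pts_finite by (simp add: prod.delta)
  finally show ?thesis .
qed

lemma noise_sum: "(\<Sum>Z\<in>words m. noise_prob m eps Z) = 1"
  using noise_marg[OF pts_empty, where eps=eps and g="\<lambda>_. 1"] by simp

lemma noise_ent:
  assumes "0 < eps" "eps < 1"
  shows "(\<Sum>Z\<in>words m. noise_prob m eps Z * ln (noise_prob m eps Z))
      = real (card (pts m)) * (eps * ln eps + (1 - eps) * ln (1 - eps))"
proof -
  have "(\<Sum>Z\<in>words m. noise_prob m eps Z * ln (noise_prob m eps Z))
      = (\<Sum>Z\<in>words m. \<Sum>x\<in>pts m. noise_prob m eps Z * ln (if Z x then eps else 1 - eps))"
  proof (rule sum.cong)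
    fix Z
    have "ln (noise_prob m eps Z) = (\<Sum>x\<in>pts m. ln (if Z x then eps else 1 - eps))"
      unfolding noise_prob_def by (rule ln_prod[OF pts_finite]) (use assms in auto)
    then show "noise_prob m eps Z * ln (noise_prob m eps Z)
        = (\<Sum>x\<in>pts m. noise_prob m eps Z * ln (if Z x then eps else 1 - eps))"
      by (simp add: sum_distrib_left)
  qed simp
  also have "\<dots> = (\<Sum>x\<in>pts m. \<Sum>Z\<in>words m. noise_prob m eps Z * ln (if Z x then eps else 1 - eps))"
    by (rule sum.swap)
  also have "\<dots> = (\<Sum>x\<in>pts m. eps * ln eps + (1 - eps) * ln (1 - eps))"
    by (rule sum.cong[OF refl]) (rule noise_marg[where g="\<lambda>b. ln (if b then eps else 1 - eps)", simplified])
  finally show ?thesis by simp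
qed

lemma xor_bij:
  assumes "c \<in> words m"
  shows "bij_betw (\<lambda>y x. c x \<noteq> y x) (words m) (words m)"
  by (rule bij_betw_byWitness[where f'="\<lambda>y x. c x \<noteq> y x"]) (use assms in \<open>auto simp: words_def\<close>)

lemma xor_reindex:
  assumes "c \<in> words m"
  shows "(\<Sum>y\<in>words m. h (\<lambda>x. c x \<noteq> y x)) = (\<Sum>Z\<in>words m. h Z)"
  using sum.reindex_bij_betw[OF xor_bij[OF assms], of h] .

definition qd :: "nat \<Rightarrow> nat \<Rightarrow> real \<Rightarrow> (nat set \<Rightarrow> bool) \<Rightarrow> real" where
  "qd m r eps y = (\<Sum>c\<in>RM m r. noise_prob m eps (\<lambda>x. c x \<noteq> y x)) / real (card (RM m r))"

lemma qd_pos: "0 < eps \<Longrightarrow> eps < 1 \<Longrightarrow> 0 < qd m r eps y"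
  unfolding qd_def using RM_card_pos RM_finite RM_nonempty noise_pos
  by (intro divide_pos_pos sum_pos) auto

lemma qd_sum: "(\<Sum>y\<in>words m. qd m r eps y) = 1"
proof -
  have "(\<Sum>y\<in>words m. qd m r eps y)
      = (\<Sum>c\<in>RM m r. \<Sum>y\<in>words m. noise_prob m eps (\<lambda>x. c x \<noteq> y x)) / real (card (RM m r))"
    unfolding qd_def by (simp add: sum_divide_distrib[symmetric] sum.swap[of _ "words m"])
  also have "\<dots> = (\<Sum>c\<in>RM m r. 1) / real (card (RM m r))"
    using xor_reindex[of _ m "noise_prob m eps"] RM_words noise_sum by (simp add: subset_iff)
  also have "\<dots> = 1" using RM_card_pos by simp
  finally show ?thesis .
qed

lemma Pm_V:
  assumes "y \<in> words m"
  shows "Pm (words m) p (pts m) y = p y"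
proof -
  have "{z \<in> words m. agr (pts m) z y} = {y}"
    using assms unfolding words_def agr_def by (auto simp: fun_eq_iff)
  then show ?thesis unfolding Pm_def by simp
qed

lemma Hn_V_bound:
  assumes "0 < eps" "eps < 1"
  shows "Hn (words m) (qd m r eps) (pts m)
    \<le> ln (real (card (RM m r))) - real (card (pts m)) * (eps * ln eps + (1 - eps) * ln (1 - eps))"
proof -
  define N where "N = real (card (RM m r))"
  have N: "0 < N" unfolding N_def using RM_card_pos by simp
  define nz where "nz y c = noise_prob m eps (\<lambda>x. c x \<noteq> y x)" for y c :: "nat set \<Rightarrow> bool"
  have nzpos: "0 < nz y c" for y c unfolding nz_def using noise_pos assms by blast
  have lnq: "- ln (qd m r eps y) \<le> ln N - ln (nz y c)" if "c \<in> RM m r" for y c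
  proof -
    have "nz y c \<le> (\<Sum>c\<in>RM m r. nz y c)"
      using that RM_finite nzpos by (intro member_le_sum) (auto intro: less_imp_le)
    then have "nz y c / N \<le> qd m r eps y" unfolding qd_def nz_def N_def
      using N by (simp add: divide_right_mono N_def)
    then have "ln (nz y c / N) \<le> ln (qd m r eps y)"
      using nzpos[of y c] N qd_pos[OF assms, of m r y] by (subst ln_le_cancel_iff) auto
    moreover have "ln (nz y c / N) = ln (nz y c) - ln N" using nzpos[of y c] N by (simp add: ln_div)
    ultimately show ?thesis by linarith
  qed
  have "Hn (words m) (qd m r eps) (pts m) = (\<Sum>y\<in>words m. qd m r eps y * (- ln (qd m r eps y)))"
    unfolding Hn_def by (simp add: Pm_V sum_negf[symmetric])
  also have "\<dots> = (\<Sum>y\<in>words m. \<Sum>c\<in>RM m r. nz y c / N * (- ln (qd m r eps y)))"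
  proof (rule sum.cong[OF refl])
    fix y
    have qeq: "qd m r eps y = (\<Sum>c\<in>RM m r. nz y c / N)"
      unfolding qd_def nz_def N_def by (simp add: sum_divide_distrib)
    show "qd m r eps y * - ln (qd m r eps y) = (\<Sum>c\<in>RM m r. nz y c / N * - ln (qd m r eps y))"
      by (simp only: sum_distrib_right[symmetric] qeq[symmetric])
  qed
  also have "\<dots> \<le> (\<Sum>y\<in>words m. \<Sum>c\<in>RM m r. nz y c / N * (ln N - ln (nz y c)))"
    by (intro sum_mono mult_left_mono lnq) (use nzpos N in \<open>auto intro: less_imp_le\<close>)
  also have "\<dots> = (\<Sum>c\<in>RM m r. \<Sum>y\<in>words m. nz y c / N * (ln N - ln (nz y c)))"
    by (rule sum.swap)
  also have "\<dots> = (\<Sum>c\<in>RM m r. \<Sum>Z\<in>words m. noise_prob m eps Z / N * (ln N - ln (noise_prob m eps Z)))"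
    unfolding nz_def
    by (rule sum.cong[OF refl], rule xor_reindex[where h="\<lambda>Z. noise_prob m eps Z / N * (ln N - ln (noise_prob m eps Z))"])
       (use RM_words in auto)
  also have "\<dots> = (\<Sum>c\<in>RM m r. (ln N - real (card (pts m)) * (eps * ln eps + (1 - eps) * ln (1 - eps))) / N)"
  proof (rule sum.cong[OF refl])
    fix c
    have "(\<Sum>Z\<in>words m. noise_prob m eps Z / N * (ln N - ln (noise_prob m eps Z)))
        = (ln N * (\<Sum>Z\<in>words m. noise_prob m eps Z) - (\<Sum>Z\<in>words m. noise_prob m eps Z * ln (noise_prob m eps Z))) / N"
      by (simp add: sum_divide_distrib sum_distrib_left sum_subtractf[symmetric] diff_divide_distrib algebra_simps)
    then show "(\<Sum>Z\<in>words m. noise_prob m eps Z / N * (ln N - ln (noise_prob m eps Z)))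
        = (ln N - real (card (pts m)) * (eps * ln eps + (1 - eps) * ln (1 - eps))) / N"
      using noise_sum noise_ent[OF assms] by simp
  qed
  also have "\<dots> = ln N - real (card (pts m)) * (eps * ln eps + (1 - eps) * ln (1 - eps))"
    using N unfolding N_def by simp
  finally show ?thesis unfolding N_def .
qed



lemma symd_symd: "symd (symd x a) a = x"
  unfolding symd_def by auto

lemma symd_bij: "a \<in> pts m \<Longrightarrow> bij_betw (\<lambda>x. symd x a) (pts m) (pts m)"
  by (rule bij_betw_byWitness[where f'="\<lambda>x. symd x a"]) (auto simp: symd_symd symd_pts)

definition shf :: "nat set \<Rightarrow> (nat set \<Rightarrow> bool) \<Rightarrow> nat set \<Rightarrow> bool" where
  "shf a y = (\<lambda>x. y (symd x a))"

lemma shf_shf: "shf a (shf a y) = y"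
  unfolding shf_def by (simp add: symd_symd)

lemma shf_words: "a \<in> pts m \<Longrightarrow> y \<in> words m \<Longrightarrow> shf a y \<in> words m"
  unfolding shf_def words_def using symd_pts by blast

lemma shf_bij_words: "a \<in> pts m \<Longrightarrow> bij_betw (shf a) (words m) (words m)"
  by (rule bij_betw_byWitness[where f'="shf a"]) (auto simp: shf_shf shf_words)

lemma shf_RM: "a \<in> pts m \<Longrightarrow> c \<in> RM m r \<Longrightarrow> shf a c \<in> RM m r"
  unfolding shf_def by (rule RM_shift)

lemma shf_bij_RM: "a \<in> pts m \<Longrightarrow> bij_betw (shf a) (RM m r) (RM m r)"
  by (rule bij_betw_byWitness[where f'="shf a"]) (auto simp: shf_shf shf_RM)

lemma noise_shf:
  assumes a: "a \<in> pts m"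
  shows "noise_prob m eps (\<lambda>x. c x \<noteq> shf a y x) = noise_prob m eps (\<lambda>x. shf a c x \<noteq> y x)"
proof -
  define G where "G x = (if c x \<noteq> y (symd x a) then eps else 1 - eps)" for x
  have "noise_prob m eps (\<lambda>x. c x \<noteq> shf a y x) = (\<Prod>x\<in>pts m. G x)"
    unfolding noise_prob_def G_def shf_def by simp
  also have "\<dots> = (\<Prod>x\<in>pts m. G (symd x a))"
    by (rule prod.reindex_bij_betw[OF symd_bij[OF a], symmetric])
  also have "\<dots> = noise_prob m eps (\<lambda>x. shf a c x \<noteq> y x)"
    unfolding noise_prob_def G_def shf_def by (simp add: symd_symd)
  finally show ?thesis .
qed

lemma qd_shf:
  assumes a: "a \<in> pts m"
  shows "qd m r eps (shf a y) = qd m r eps y"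
proof -
  have "(\<Sum>c\<in>RM m r. noise_prob m eps (\<lambda>x. c x \<noteq> shf a y x))
      = (\<Sum>c\<in>RM m r. noise_prob m eps (\<lambda>x. shf a c x \<noteq> y x))"
    using noise_shf[OF a] by simp
  also have "\<dots> = (\<Sum>c\<in>RM m r. noise_prob m eps (\<lambda>x. c x \<noteq> y x))"
    by (rule sum.reindex_bij_betw[OF shf_bij_RM[OF a], where g="\<lambda>c. noise_prob m eps (\<lambda>x. c x \<noteq> y x)"])
  finally show ?thesis unfolding qd_def by simp
qed

lemma Hn_shift:
  assumes a: "a \<in> pts m"
  shows "Hn (words m) (qd m r eps) (pts m - {a}) = Hn (words m) (qd m r eps) (pts m - {{}})"
proof (rule Hn_invariant[OF words_finite shf_bij_words[OF a]])
  fix y assume "y \<in> words m"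
  show "qd m r eps (shf a y) = qd m r eps y" by (rule qd_shf[OF a])
next
  fix y z :: "nat set \<Rightarrow> bool"
  have "(\<forall>x\<in>pts m - {a}. z (symd x a) = y (symd x a)) \<longleftrightarrow> (\<forall>x\<in>pts m - {{}}. z x = y x)"
  proof
    assume h: "\<forall>x\<in>pts m - {a}. z (symd x a) = y (symd x a)"
    show "\<forall>x\<in>pts m - {{}}. z x = y x"
    proof
      fix x assume x: "x \<in> pts m - {{}}"
      have "symd x a \<in> pts m" using x symd_pts[OF a] by auto
      moreover have "symd x a \<noteq> a" using x unfolding symd_def by auto
      ultimately have "z (symd (symd x a) a) = y (symd (symd x a) a)" using h by auto
      then show "z x = y x" by (simp add: symd_symd)
    qed
  next
    assume h: "\<forall>x\<in>pts m - {{}}. z x = y x"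
    show "\<forall>x\<in>pts m - {a}. z (symd x a) = y (symd x a)"
    proof
      fix x assume x: "x \<in> pts m - {a}"
      have "symd x a \<in> pts m" using x symd_pts[OF a] by auto
      moreover have "symd x a \<noteq> {}" using x unfolding symd_def by auto
      ultimately show "z (symd x a) = y (symd x a)" using h by auto
    qed
  qed
  then show "agr (pts m - {a}) (shf a z) (shf a y) = agr (pts m - {{}}) z y"
    unfolding agr_def shf_def by simp
qed


definition W0 :: "nat \<Rightarrow> (nat set \<Rightarrow> bool) set" where
  "W0 m = {y\<in>words m. \<not> y {}}"

lemma pairsum:
  fixes f :: "(nat set \<Rightarrow> bool) \<Rightarrow> real"
  shows "(\<Sum>y\<in>words m. f y) = (\<Sum>y\<in>W0 m. f y + f (y({} := True)))"
proof -
  have eq: "words m = W0 m \<union> (\<lambda>y. y({} := True)) ` W0 m"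
  proof (intro equalityI subsetI)
    fix y assume y: "y \<in> words m"
    show "y \<in> W0 m \<union> (\<lambda>y. y({} := True)) ` W0 m"
    proof (cases "y {}")
      case True
      have "y({} := False) \<in> W0 m" using y pts_empty unfolding W0_def words_def by auto
      moreover have "y = (y({} := False))({} := True)" using True by (auto simp: fun_eq_iff)
      ultimately show ?thesis by blast
    next
      case False then show ?thesis using y unfolding W0_def by auto
    qed
  next
    fix y assume "y \<in> W0 m \<union> (\<lambda>y. y({} := True)) ` W0 m"
    then show "y \<in> words m" using pts_empty[of m] unfolding W0_def words_def
      by auto (metis fun_upd_other)
  qed
  have disj: "W0 m \<inter> (\<lambda>y. y({} := True)) ` W0 m = {}" unfolding W0_def by auto
  have inj: "inj_on (\<lambda>y. y({} := True)) (W0 m)"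
  proof (rule inj_onI)
    fix y z assume yz: "y \<in> W0 m" "z \<in> W0 m" "y({} := True) = z({} := True)"
    show "y = z"
    proof
      fix x show "y x = z x"
      proof (cases "x = {}")
        case True then show ?thesis using yz unfolding W0_def by simp
      next
        case False then show ?thesis using fun_cong[OF yz(3), of x] by simp
      qed
    qed
  qed
  have finW0: "finite (W0 m)" unfolding W0_def using words_finite by simp
  have "(\<Sum>y\<in>words m. f y) = (\<Sum>y\<in>W0 m. f y) + (\<Sum>y\<in>(\<lambda>y. y({} := True)) ` W0 m. f y)"
    unfolding eq by (rule sum.union_disjoint) (use finW0 disj in auto)
  also have "(\<Sum>y\<in>(\<lambda>y. y({} := True)) ` W0 m. f y) = (\<Sum>y\<in>W0 m. f (y({} := True)))"
    by (rule sum.reindex[OF inj, unfolded comp_def])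
  finally show ?thesis by (simp add: sum.distrib)
qed

lemma Pm_Vm:
  assumes y: "y \<in> words m"
  shows "Pm (words m) p (pts m - {{}}) y = p y + p (y({} := \<not> y {}))"
proof -
  have "{z \<in> words m. agr (pts m - {{}}) z y} = {y, y({} := \<not> y {})}"
  proof (intro equalityI subsetI)
    fix z assume z: "z \<in> {z \<in> words m. agr (pts m - {{}}) z y}"
    have "z x = y x" if "x \<noteq> {}" for x
      using z y that unfolding agr_def words_def by (cases "x \<in> pts m") auto
    have "z x = (y({} := \<not> y {})) x" if "z {} \<noteq> y {}" for x
      using \<open>\<And>x. x \<noteq> {} \<Longrightarrow> z x = y x\<close>[of x] that by (cases "x = {}") auto
    moreover have "z x = y x" if "z {} = y {}" for x
      using \<open>\<And>x. x \<noteq> {} \<Longrightarrow> z x = y x\<close>[of x] that by (cases "x = {}") auto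
    ultimately show "z \<in> {y, y({} := \<not> y {})}"
      by (cases "z {} = y {}") (simp_all add: fun_eq_iff)
  next
    fix z assume "z \<in> {y, y({} := \<not> y {})}"
    then have "z = y \<or> z = y({} := \<not> y {})" by auto
    then show "z \<in> {z \<in> words m. agr (pts m - {{}}) z y}"
    proof
      assume "z = y" then show ?thesis using y by (simp add: agr_def)
    next
      assume zz: "z = y({} := \<not> y {})"
      have "z \<in> words m" unfolding words_def
      proof (intro CollectI allI impI)
        fix x assume "x \<notin> pts m"
        then have "x \<noteq> {}" using pts_empty[of m] by auto
        then show "\<not> z x" using y \<open>x \<notin> pts m\<close> zz unfolding words_def by simp
      qed
      then show ?thesis using zz by (simp add: agr_def)
    qed
  qed
  moreover have "y \<noteq> y({} := \<not> y {})" by (auto simp: fun_eq_iff)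
  ultimately show ?thesis unfolding Pm_def by simp
qed

definition Pp :: "nat \<Rightarrow> real \<Rightarrow> (nat set \<Rightarrow> bool) \<Rightarrow> (nat set \<Rightarrow> bool) \<Rightarrow> real" where
  "Pp m eps c y = (\<Prod>x\<in>pts m - {{}}. if c x = y x then 1 - eps else eps)"

lemma lik_Pp: "lik m r eps y b = (\<Sum>g\<in>{g \<in> RM m r. g {} = b}. Pp m eps g y)"
  unfolding lik_def Pp_def by simp

lemma Pp_upd: "Pp m eps c (y({} := b)) = Pp m eps c y"
  unfolding Pp_def by (rule prod.cong) auto

lemma lik_upd: "lik m r eps (y({} := b)) b' = lik m r eps y b'"
  unfolding lik_Pp Pp_upd ..

lemma nz_split:
  "noise_prob m eps (\<lambda>x. c x \<noteq> y x) = (if c {} = y {} then 1 - eps else eps) * Pp m eps c y"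
proof -
  have "noise_prob m eps (\<lambda>x. c x \<noteq> y x) = (\<Prod>x\<in>pts m. if c x = y x then 1 - eps else eps)"
    unfolding noise_prob_def by (rule prod.cong) auto
  also have "\<dots> = (if c {} = y {} then 1 - eps else eps) * Pp m eps c y"
    unfolding Pp_def by (subst prod.remove[OF pts_finite pts_empty]) simp
  finally show ?thesis .
qed

lemma sum_split_bool:
  fixes f :: "(nat set \<Rightarrow> bool) \<Rightarrow> real"
  assumes "finite C"
  shows "(\<Sum>c\<in>C. f c) = (\<Sum>c\<in>{c\<in>C. c {} = False}. f c) + (\<Sum>c\<in>{c\<in>C. c {} = True}. f c)"
proof -
  have "(\<Sum>c\<in>C. f c) = (\<Sum>c\<in>C. (if c {} = False then f c else 0) + (if c {} = True then f c else 0))"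
    by (rule sum.cong) auto
  also have "\<dots> = (\<Sum>c\<in>{c\<in>C. c {} = False}. f c) + (\<Sum>c\<in>{c\<in>C. c {} = True}. f c)"
    by (simp only: sum.distrib sum.inter_filter[OF assms])
  finally show ?thesis .
qed

lemma qd_W0:
  assumes "y {} = False"
  shows "qd m r eps y * real (card (RM m r)) = (1 - eps) * lik m r eps y False + eps * lik m r eps y True"
    and "qd m r eps (y({} := True)) * real (card (RM m r)) = eps * lik m r eps y False + (1 - eps) * lik m r eps y True"
proof -
  have N: "real (card (RM m r)) \<noteq> 0" using RM_card_pos by simp
  have "qd m r eps y * real (card (RM m r)) = (\<Sum>c\<in>RM m r. (if c {} = y {} then 1 - eps else eps) * Pp m eps c y)"
    unfolding qd_def nz_split using N by simp
  also have "\<dots> = (\<Sum>c\<in>{c\<in>RM m r. c {} = False}. (1 - eps) * Pp m eps c y) + (\<Sum>c\<in>{c\<in>RM m r. c {} = True}. eps * Pp m eps c y)"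
    by (subst sum_split_bool[OF RM_finite]) (use assms in \<open>auto intro!: arg_cong2[where f="(+)"] sum.cong\<close>)
  also have "\<dots> = (1 - eps) * lik m r eps y False + eps * lik m r eps y True"
    unfolding lik_Pp by (simp add: sum_distrib_left)
  finally show "qd m r eps y * real (card (RM m r)) = (1 - eps) * lik m r eps y False + eps * lik m r eps y True" .
  have "qd m r eps (y({} := True)) * real (card (RM m r)) = (\<Sum>c\<in>RM m r. (if c {} = True then 1 - eps else eps) * Pp m eps c y)"
    unfolding qd_def nz_split Pp_upd using N by simp
  also have "\<dots> = (\<Sum>c\<in>{c\<in>RM m r. c {} = False}. eps * Pp m eps c y) + (\<Sum>c\<in>{c\<in>RM m r. c {} = True}. (1 - eps) * Pp m eps c y)"
    by (subst sum_split_bool[OF RM_finite]) (auto intro!: arg_cong2[where f="(+)"] sum.cong)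
  also have "\<dots> = eps * lik m r eps y False + (1 - eps) * lik m r eps y True"
    unfolding lik_Pp by (simp add: sum_distrib_left)
  finally show "qd m r eps (y({} := True)) * real (card (RM m r)) = eps * lik m r eps y False + (1 - eps) * lik m r eps y True" .
qed


definition DD :: "nat \<Rightarrow> nat \<Rightarrow> real \<Rightarrow> bool \<Rightarrow> (nat set \<Rightarrow> bool) \<Rightarrow> real" where
  "DD m r eps b y = (if lik m r eps y (\<not> b) > lik m r eps y b then 1
     else if lik m r eps y (\<not> b) = lik m r eps y b then 1/2 else 0)"

lemma DD_upd: "DD m r eps b (y({} := b')) = DD m r eps b y"
  unfolding DD_def lik_upd ..

lemma dec_err_DD: "dec_err m r eps c (\<lambda>x. c x \<noteq> y x) = DD m r eps (c {}) y"
proof -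
  have "(\<lambda>x. c x \<noteq> (c x \<noteq> y x)) = y" by auto
  then show ?thesis unfolding dec_err_def DD_def Let_def by simp
qed

lemma DD_min: "a * DD m r eps False y + b * DD m r eps True y = min a b"
  if "a = lik m r eps y False" "b = lik m r eps y True"
  using that unfolding DD_def by (auto simp: min_def)

lemma P_e_eq:
  "P_e m r eps = (\<Sum>y\<in>W0 m. min (lik m r eps y False) (lik m r eps y True)) / real (card (RM m r))"
proof -
  define N where "N = real (card (RM m r))"
  have inner: "(\<Sum>Z\<in>words m. noise_prob m eps Z * dec_err m r eps c Z)
      = (\<Sum>y\<in>W0 m. Pp m eps c y * DD m r eps (c {}) y)" if c: "c \<in> RM m r" for c
  proof -
    have cw: "c \<in> words m" using c RM_words by auto
    have "(\<Sum>Z\<in>words m. noise_prob m eps Z * dec_err m r eps c Z)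
        = (\<Sum>y\<in>words m. noise_prob m eps (\<lambda>x. c x \<noteq> y x) * dec_err m r eps c (\<lambda>x. c x \<noteq> y x))"
      by (rule xor_reindex[OF cw, symmetric])
    also have "\<dots> = (\<Sum>y\<in>words m. noise_prob m eps (\<lambda>x. c x \<noteq> y x) * DD m r eps (c {}) y)"
      by (simp only: dec_err_DD)
    also have "\<dots> = (\<Sum>y\<in>W0 m. noise_prob m eps (\<lambda>x. c x \<noteq> y x) * DD m r eps (c {}) y
        + noise_prob m eps (\<lambda>x. c x \<noteq> (y({} := True)) x) * DD m r eps (c {}) (y({} := True)))"
      by (rule pairsum)
    also have "\<dots> = (\<Sum>y\<in>W0 m. Pp m eps c y * DD m r eps (c {}) y)"
    proof (rule sum.cong[OF refl])
      fix y assume "y \<in> W0 m"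
      then have y0: "y {} = False" unfolding W0_def by auto
      show "noise_prob m eps (\<lambda>x. c x \<noteq> y x) * DD m r eps (c {}) y
        + noise_prob m eps (\<lambda>x. c x \<noteq> (y({} := True)) x) * DD m r eps (c {}) (y({} := True))
        = Pp m eps c y * DD m r eps (c {}) y"
        unfolding nz_split DD_upd Pp_upd using y0
        by (cases "c {}") (simp_all add: algebra_simps)
    qed
    finally show ?thesis .
  qed
  have "P_e m r eps = (\<Sum>c\<in>RM m r. \<Sum>Z\<in>words m. noise_prob m eps Z * dec_err m r eps c Z) / N"
    unfolding P_e_def N_def by (simp add: sum_divide_distrib sum_distrib_left)
  also have "(\<Sum>c\<in>RM m r. \<Sum>Z\<in>words m. noise_prob m eps Z * dec_err m r eps c Z)
      = (\<Sum>c\<in>RM m r. \<Sum>y\<in>W0 m. Pp m eps c y * DD m r eps (c {}) y)"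
    using inner by simp
  also have "\<dots> = (\<Sum>y\<in>W0 m. \<Sum>c\<in>RM m r. Pp m eps c y * DD m r eps (c {}) y)"
    by (rule sum.swap)
  also have "\<dots> = (\<Sum>y\<in>W0 m. min (lik m r eps y False) (lik m r eps y True))"
  proof (rule sum.cong[OF refl])
    fix y
    have "(\<Sum>c\<in>RM m r. Pp m eps c y * DD m r eps (c {}) y)
        = (\<Sum>c\<in>{c\<in>RM m r. c {} = False}. Pp m eps c y * DD m r eps (c {}) y)
          + (\<Sum>c\<in>{c\<in>RM m r. c {} = True}. Pp m eps c y * DD m r eps (c {}) y)"
      by (rule sum_split_bool[OF RM_finite])
    also have "\<dots> = lik m r eps y False * DD m r eps False y + lik m r eps y True * DD m r eps True y"
      unfolding lik_Pp sum_distrib_right by (intro arg_cong2[where f="(+)"] sum.cong) auto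
    also have "\<dots> = min (lik m r eps y False) (lik m r eps y True)"
      by (rule DD_min) auto
    finally show "(\<Sum>c\<in>RM m r. Pp m eps c y * DD m r eps (c {}) y) = min (lik m r eps y False) (lik m r eps y True)" .
  qed
  finally show ?thesis unfolding N_def .
qed

lemma lik_nonneg: "0 < eps \<Longrightarrow> eps < 1 \<Longrightarrow> 0 \<le> lik m r eps y b"
  unfolding lik_Pp Pp_def by (intro sum_nonneg prod_nonneg) auto

lemma min_convex:
  fixes a b e :: real
  assumes "0 \<le> e" "e \<le> 1"
  shows "min a b \<le> (1 - e) * a + e * b"
proof -
  have "(1 - e) * min a b \<le> (1 - e) * a" using assms by (intro mult_left_mono) auto
  moreover have "e * min a b \<le> e * b" using assms by (intro mult_left_mono) auto
  ultimately show ?thesis by (simp add: algebra_simps)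
qed

lemma D_bound:
  assumes e: "0 < eps" "eps < 1"
  shows "2 * ln 2 * P_e m r eps
    \<le> Hn (words m) (qd m r eps) (pts m) - Hn (words m) (qd m r eps) (pts m - {{}})"
proof -
  define q where "q = qd m r eps"
  define N where "N = real (card (RM m r))"
  have N: "0 < N" unfolding N_def using RM_card_pos by simp
  have qpos: "0 < q y" for y unfolding q_def using qd_pos[OF e] .
  have "Hn (words m) q (pts m) - Hn (words m) q (pts m - {{}})
      = (\<Sum>y\<in>words m. q y * (ln (q y + q (y({} := \<not> y {}))) - ln (q y)))"
    unfolding Hn_def by (simp add: Pm_V Pm_Vm sum_subtractf[symmetric] algebra_simps)
  also have "\<dots> = (\<Sum>y\<in>W0 m. q y * (ln (q y + q (y({} := True))) - ln (q y))
      + q (y({} := True)) * (ln (q (y({} := True)) + q y) - ln (q (y({} := True)))))"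
  proof -
    have "(\<Sum>y\<in>words m. q y * (ln (q y + q (y({} := \<not> y {}))) - ln (q y)))
      = (\<Sum>y\<in>W0 m. q y * (ln (q y + q (y({} := \<not> y {}))) - ln (q y))
          + q (y({} := True)) * (ln (q (y({} := True)) + q ((y({} := True))({} := \<not> (y({} := True)) {}))) - ln (q (y({} := True)))))"
      by (rule pairsum)
    also have "\<dots> = (\<Sum>y\<in>W0 m. q y * (ln (q y + q (y({} := True))) - ln (q y))
      + q (y({} := True)) * (ln (q (y({} := True)) + q y) - ln (q (y({} := True)))))"
    proof (rule sum.cong[OF refl])
      fix y assume "y \<in> W0 m"
      then have y0: "y {} = False" unfolding W0_def by auto
      then have "(y({} := True))({} := \<not> (y({} := True)) {}) = y" by (auto simp: fun_eq_iff)
      then show "q y * (ln (q y + q (y({} := \<not> y {}))) - ln (q y))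
          + q (y({} := True)) * (ln (q (y({} := True)) + q ((y({} := True))({} := \<not> (y({} := True)) {}))) - ln (q (y({} := True))))
        = q y * (ln (q y + q (y({} := True))) - ln (q y))
          + q (y({} := True)) * (ln (q (y({} := True)) + q y) - ln (q (y({} := True))))"
        using y0 by simp
    qed
    finally show ?thesis .
  qed
  also have "\<dots> \<ge> (\<Sum>y\<in>W0 m. 2 * ln 2 * (min (lik m r eps y False) (lik m r eps y True) / N))"
  proof (rule sum_mono)
    fix y assume "y \<in> W0 m"
    then have y0: "y {} = False" unfolding W0_def by auto
    have h: "2 * ln 2 * min (q y) (q (y({} := True)))
        \<le> q y * (ln (q y + q (y({} := True))) - ln (q y))
          + q (y({} := True)) * (ln (q (y({} := True)) + q y) - ln (q (y({} := True))))"
      using hbound[OF qpos qpos, of y "y({} := True)"] by (simp add: add.commute)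
    have q1: "q y = ((1 - eps) * lik m r eps y False + eps * lik m r eps y True) / N"
      using qd_W0(1)[where y=y and m=m and r=r and eps=eps, OF y0] N unfolding q_def N_def by (simp add: field_simps)
    have q2: "q (y({} := True)) = (eps * lik m r eps y False + (1 - eps) * lik m r eps y True) / N"
      using qd_W0(2)[where y=y and m=m and r=r and eps=eps, OF y0] N unfolding q_def N_def by (simp add: field_simps)
    have m1: "min (lik m r eps y False) (lik m r eps y True) / N \<le> q y"
      unfolding q1 using min_convex[of eps "lik m r eps y False" "lik m r eps y True"] e N
      by (intro divide_right_mono) auto
    have m2: "min (lik m r eps y False) (lik m r eps y True) / N \<le> q (y({} := True))"
      unfolding q2 using min_convex[of "1 - eps" "lik m r eps y False" "lik m r eps y True"] e N
      by (intro divide_right_mono) (auto simp: min.commute)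
    have "2 * ln 2 * (min (lik m r eps y False) (lik m r eps y True) / N)
        \<le> 2 * ln 2 * min (q y) (q (y({} := True)))"
      using m1 m2 by (intro mult_left_mono) auto
    then show "2 * ln 2 * (min (lik m r eps y False) (lik m r eps y True) / N)
        \<le> q y * (ln (q y + q (y({} := True))) - ln (q y))
          + q (y({} := True)) * (ln (q (y({} := True)) + q y) - ln (q (y({} := True))))"
      using h by linarith
  qed
  moreover have "(\<Sum>y\<in>W0 m. 2 * ln 2 * (min (lik m r eps y False) (lik m r eps y True) / N))
      = 2 * ln 2 * P_e m r eps"
    unfolding P_e_eq N_def by (simp add: sum_distrib_left sum_divide_distrib)
  ultimately show ?thesis unfolding q_def by linarith
qed



lemma main_bound:
  assumes e: "0 < eps" "eps < 1"
  shows "P_e m r eps \<le> (real (binom_le m r) / 2 ^ m + bin_entropy eps) / 2"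
proof -
  define H where "H = Hn (words m) (qd m r eps)"
  define n where "n = real (card (pts m))"
  define N where "N = real (card (RM m r))"
  define k where "k = real (binom_le m r)"
  define hn where "hn = - (eps * ln eps + (1 - eps) * ln (1 - eps))"
  have n: "n = 2 ^ m" unfolding n_def pts_card by simp
  have npos: "0 < n" unfolding n by simp
  have han': "(\<Sum>a\<in>pts m. H (pts m) - H (pts m - {a})) \<le> H (pts m)"
    unfolding H_def
    by (rule han[OF words_finite _ pts_finite qd_sum]) (rule qd_pos[OF e])
  have "(\<Sum>a\<in>pts m. H (pts m) - H (pts m - {a})) = (\<Sum>a\<in>pts m. H (pts m) - H (pts m - {{}}))"
    unfolding H_def by (rule sum.cong[OF refl]) (simp add: Hn_shift)
  also have "\<dots> = n * (H (pts m) - H (pts m - {{}}))" unfolding n_def by simp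
  finally have s: "n * (H (pts m) - H (pts m - {{}})) \<le> H (pts m)" using han' by simp
  have D: "2 * ln 2 * P_e m r eps \<le> H (pts m) - H (pts m - {{}})"
    unfolding H_def by (rule D_bound[OF e])
  have HV: "H (pts m) \<le> ln N + n * hn"
    using Hn_V_bound[OF e, of m r] unfolding H_def N_def n_def hn_def by (simp add: algebra_simps)
  have lnN: "ln N \<le> k * ln 2"
  proof -
    have "N \<le> 2 ^ binom_le m r" unfolding N_def using card_RM[of m r]
      by (metis of_nat_le_iff of_nat_numeral of_nat_power)
    moreover have "0 < N" unfolding N_def using RM_card_pos by simp
    ultimately have "ln N \<le> ln (2 ^ binom_le m r)" by simp
    also have "\<dots> = k * ln 2" unfolding k_def by (simp add: ln_realpow)
    finally show ?thesis .
  qed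
  have hn: "hn = ln 2 * bin_entropy eps"
    unfolding hn_def bin_entropy_def log_def by (simp add: field_simps)
  have "n * (2 * ln 2 * P_e m r eps) \<le> n * (H (pts m) - H (pts m - {{}}))"
    using D npos by (intro mult_left_mono) auto
  also have "\<dots> \<le> k * ln 2 + n * (ln 2 * bin_entropy eps)"
    using s HV lnN unfolding hn by linarith
  finally have X: "n * (2 * ln 2 * P_e m r eps) \<le> k * ln 2 + n * (ln 2 * bin_entropy eps)" .
  have ln2: "0 < ln (2::real)" by simp
  have "P_e m r eps = (n * (2 * ln 2 * P_e m r eps)) / (2 * n * ln 2)"
    using npos ln2 by (simp add: field_simps)
  also have "\<dots> \<le> (k * ln 2 + n * (ln 2 * bin_entropy eps)) / (2 * n * ln 2)"
    by (rule divide_right_mono[OF X]) (use npos ln2 in simp)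
  also have "\<dots> = (k / n + bin_entropy eps) / 2"
    using npos ln2 by (simp add: field_simps)
  finally have "P_e m r eps \<le> (k / n + bin_entropy eps) / 2" .
  then show ?thesis unfolding k_def n by simp
qed

theorem corollary1:
  fixes eps :: real and m r :: "nat \<Rightarrow> nat"
  assumes "0 < eps" and "eps < 1/2"
    and "\<And>i. 0 < m i" and "\<And>i. 0 < r i" and "\<And>i. r i \<le> m i"
    and "filterlim m at_top sequentially"
    and "limsup (\<lambda>i. ereal (real (binom_le (m i) (r i)) / 2 ^ m i)) < ereal (1 - bin_entropy eps)"
  shows "\<exists>c>0. eventually (\<lambda>i. P_e (m i) (r i) eps < 1/2 - c) sequentially"
proof -
  define h where "h = bin_entropy eps"
  obtain d where d1: "limsup (\<lambda>i. ereal (real (binom_le (m i) (r i)) / 2 ^ m i)) < ereal d"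
    and d2: "ereal d < ereal (1 - h)"
    using ereal_dense2[OF assms(7)] unfolding h_def by blast
  have dh: "d < 1 - h" using d2 by simp
  have ev: "eventually (\<lambda>i. ereal (real (binom_le (m i) (r i)) / 2 ^ m i) < ereal d) sequentially"
    by (rule Limsup_lessD[OF d1])
  define c where "c = (1 - h - d) / 4"
  have c: "0 < c" unfolding c_def using dh by simp
  have e1: "eps < 1" using assms(2) by simp
  have "eventually (\<lambda>i. P_e (m i) (r i) eps < 1/2 - c) sequentially"
    using ev
  proof (rule eventually_mono)
    fix i assume "ereal (real (binom_le (m i) (r i)) / 2 ^ m i) < ereal d"
    then have lt: "real (binom_le (m i) (r i)) / 2 ^ m i < d" by simp
    have "P_e (m i) (r i) eps \<le> (real (binom_le (m i) (r i)) / 2 ^ m i + h) / 2"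
      unfolding h_def by (rule main_bound[OF assms(1) e1])
    also have "\<dots> < (d + h) / 2" by (intro divide_strict_right_mono add_strict_right_mono lt) auto
    also have "\<dots> < 1/2 - c" using dh unfolding c_def by (simp add: field_simps)
    finally show "P_e (m i) (r i) eps < 1/2 - c" .
  qed
  then show ?thesis using c by blast
qed

end
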